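(* Let $N$ be a positive odd integer and let $\alpha>-1$, $\beta>-1$; put $\sigma=\alpha+\beta$. Let $P_n$, $0\le n\le N$, be the monic dual $-1$ Hahn polynomials and $y_s$ the grid defined in the context. Define weights, for $0\le s\le (N-1)/2$, $$w_{2s}=(-1)^s\frac{(-(N-1)/2)_s}{s!}\,\frac{(1/2+\alpha/2)_s\,(1+\sigma/2)_s}{(1/2+\beta/2)_s\,(N/2+3/2+\sigma/2)_s},$$ $$w_{2s+1}=(-1)^s\frac{(-(N-1)/2)_s}{s!}\,\frac{(1/2+\alpha/2)_{s+1}\,(1+\sigma/2)_s}{(1/2+\beta/2)_{s+1}\,(N/2+3/2+\sigma/2)_s}.$$ Then all $w_s$ ($0\le s\le N$) are well defined and strictly positive, and for all $0\le n,m\le N$, $$\sum_{s=0}^N w_s\,P_n(y_s)P_m(y_s)=\kappa_0\,u_1^{(-1)}\cdots u_n^{(-1)}\,\delta_{nm},\qquad \kappa_0=\sum_{s=0}^N w_s=\frac{(1+\sigma/2)_{(N+1)/2}}{((\beta+1)/2)_{(N+1)/2}}.$$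
   Context: $(c)_k=c(c+1)\cdots(c+k-1)$ is the Pochhammer symbol, $(c)_0=1$. For $N$ odd and $\sigma=\alpha+\beta$: $b_n^{(-1)}=-1-\alpha+\beta$ for $n$ even, $b_n^{(-1)}=-1+\alpha-\beta$ for $n$ odd; $u_n^{(-1)}=4n(N+1-n)$ for $n$ even, $u_n^{(-1)}=4(\alpha+n)(\beta+N+1-n)$ for $n$ odd. The monic dual $-1$ Hahn polynomials are defined by $P_{-1}=0$, $P_0=1$, $P_{n+1}(x)=(x-b_n^{(-1)})P_n(x)-u_n^{(-1)}P_{n-1}(x)$ for $n\ge0$. The grid is $y_s=(-1)^s(\sigma+2s+1)$, $s=0,1,\dots,N$. *)

theory Defs
  imports Complex_Main
begin

definition hb :: "real \<Rightarrow> real \<Rightarrow> nat \<Rightarrow> real" where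
  "hb \<alpha> \<beta> n = (if even n then -1 - \<alpha> + \<beta> else -1 + \<alpha> - \<beta>)"

definition hu :: "nat \<Rightarrow> real \<Rightarrow> real \<Rightarrow> nat \<Rightarrow> real" where
  "hu N \<alpha> \<beta> n = (if even n then 4 * real n * (real N + 1 - real n)
                    else 4 * (\<alpha> + real n) * (\<beta> + real N + 1 - real n))"

fun hP :: "nat \<Rightarrow> real \<Rightarrow> real \<Rightarrow> nat \<Rightarrow> real \<Rightarrow> real" where
  "hP N \<alpha> \<beta> 0 x = 1"
| "hP N \<alpha> \<beta> (Suc 0) x = x - hb \<alpha> \<beta> 0"
| "hP N \<alpha> \<beta> (Suc (Suc n)) x =
     (x - hb \<alpha> \<beta> (Suc n)) * hP N \<alpha> \<beta> (Suc n) x - hu N \<alpha> \<beta> (Suc n) * hP N \<alpha> \<beta> n x"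

definition hy :: "real \<Rightarrow> real \<Rightarrow> nat \<Rightarrow> real" where
  "hy \<alpha> \<beta> s = (-1) ^ s * (\<alpha> + \<beta> + 2 * real s + 1)"

definition hw :: "nat \<Rightarrow> real \<Rightarrow> real \<Rightarrow> nat \<Rightarrow> real" where
  "hw N \<alpha> \<beta> t = (let s = t div 2; \<sigma> = \<alpha> + \<beta> in
     (if even t then
        (-1) ^ s * pochhammer (- (real N - 1) / 2) s / fact s
        * (pochhammer (1/2 + \<alpha>/2) s * pochhammer (1 + \<sigma>/2) s)
        / (pochhammer (1/2 + \<beta>/2) s * pochhammer (real N / 2 + 3/2 + \<sigma>/2) s)
      else
        (-1) ^ s * pochhammer (- (real N - 1) / 2) s / fact s
        * (pochhammer (1/2 + \<alpha>/2) (s + 1) * pochhammer (1 + \<sigma>/2) s)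
        / (pochhammer (1/2 + \<beta>/2) (s + 1) * pochhammer (real N / 2 + 3/2 + \<sigma>/2) s)))"

end

theory Submission
  imports Defs
begin


fun hR :: "nat \<Rightarrow> real \<Rightarrow> real \<Rightarrow> nat \<Rightarrow> real \<Rightarrow> real" where
  "hR N a b 0 X = 1"
| "hR N a b (Suc 0) X = X - (a-b)^2 - hu N a b 1"
| "hR N a b (Suc (Suc n)) X = (X - (a-b)^2 - hu N a b (2*n+2) - hu N a b (2*n+3)) * hR N a b (Suc n) X
     - hu N a b (2*n+2) * hu N a b (2*n+1) * hR N a b n X"

fun hS :: "nat \<Rightarrow> real \<Rightarrow> real \<Rightarrow> nat \<Rightarrow> real \<Rightarrow> real" where
  "hS N a b 0 X = 1"
| "hS N a b (Suc n) X = hR N a b (Suc n) X - hu N a b (2*n+2) * hS N a b n X"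

lemma RS: "(X - (a-b)^2) * hS N a b n X = hR N a b (Suc n) X + hu N a b (2*n+1) * hR N a b n X"
proof (induction n)
  case 0 then show ?case by simp
next
  case (Suc n)
  define u1 where "u1 = hu N a b (2*n+1)"
  define u2 where "u2 = hu N a b (2*n+2)"
  define u3 where "u3 = hu N a b (2*n+3)"
  have h3: "hu N a b (2 * Suc n + 1) = u3" unfolding u3_def by (simp add: numeral_eq_Suc)
  have r2: "hR N a b (Suc (Suc n)) X = (X - (a-b)^2 - u2 - u3) * hR N a b (Suc n) X - u2 * u1 * hR N a b n X"
    unfolding u1_def u2_def u3_def by simp
  have s1: "hS N a b (Suc n) X = hR N a b (Suc n) X - u2 * hS N a b n X" unfolding u2_def by simp
  have ih: "(X - (a-b)^2) * hS N a b n X = hR N a b (Suc n) X + u1 * hR N a b n X"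
    using Suc unfolding u1_def .
  have "(X - (a-b)^2) * hS N a b (Suc n) X = (X - (a-b)^2) * hR N a b (Suc n) X - u2 * ((X - (a-b)^2) * hS N a b n X)"
    unfolding s1 by (simp add: algebra_simps)
  also have "\<dots> = (X - (a-b)^2) * hR N a b (Suc n) X - u2 * (hR N a b (Suc n) X + u1 * hR N a b n X)"
    using ih by simp
  also have "\<dots> = hR N a b (Suc (Suc n)) X + u3 * hR N a b (Suc n) X" unfolding r2 by (simp add: algebra_simps)
  finally show ?case unfolding h3 .
qed

lemma hb_even: "hb a b (2*n) = -1 - a + b" by (simp add: hb_def)
lemma hb_odd: "hb a b (Suc (2*n)) = -1 + a - b" by (simp add: hb_def)

lemma P_RS: "hP N a b (2*n) y = hR N a b n ((y+1)^2) \<and> hP N a b (Suc (2*n)) y = (y+1+a-b) * hS N a b n ((y+1)^2)"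
proof (induction n)
  case 0 then show ?case by (simp add: hb_def)
next
  case (Suc n)
  have e1: "2 * Suc n = Suc (Suc (2*n))" by simp
  have A: "hP N a b (2 * Suc n) y = hR N a b (Suc n) ((y+1)^2)"
  proof -
    have "hP N a b (2 * Suc n) y = (y - hb a b (Suc (2*n))) * hP N a b (Suc (2*n)) y - hu N a b (Suc (2*n)) * hP N a b (2*n) y"
      by (simp only: e1 hP.simps)
    also have "\<dots> = ((y+1)^2 - (a-b)^2) * hS N a b n ((y+1)^2) - hu N a b (2*n+1) * hR N a b n ((y+1)^2)"
    proof -
      have p0: "hP N a b (2*n) y = hR N a b n ((y+1)^2)" and p1: "hP N a b (Suc (2*n)) y = (y+1+a-b) * hS N a b n ((y+1)^2)"
        using Suc by auto
      show ?thesis unfolding p0 p1 hb_odd by (simp add: power2_eq_square algebra_simps)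
    qed
    also have "\<dots> = hR N a b (Suc n) ((y+1)^2)" by (simp add: RS)
    finally show ?thesis .
  qed
  have e2: "Suc (2 * Suc n) = Suc (Suc (Suc (2*n)))" by simp
  have "hP N a b (Suc (2 * Suc n)) y = (y - hb a b (Suc (Suc (2*n)))) * hP N a b (Suc (Suc (2*n))) y - hu N a b (Suc (Suc (2*n))) * hP N a b (Suc (2*n)) y"
    by (simp only: e2 hP.simps)
  also have "\<dots> = (y+1+a-b) * (hR N a b (Suc n) ((y+1)^2) - hu N a b (2*n+2) * hS N a b n ((y+1)^2))"
  proof -
    have hb2: "hb a b (Suc (Suc (2*n))) = -1 - a + b" by (simp add: hb_def)
    have q0: "hP N a b (Suc (Suc (2*n))) y = hR N a b (Suc n) ((y+1)^2)" using A e1 by simp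
    have q1: "hu N a b (Suc (Suc (2*n))) = hu N a b (2*n+2)" by simp
    have p1: "hP N a b (Suc (2*n)) y = (y+1+a-b) * hS N a b n ((y+1)^2)"
        using Suc by auto
    show ?thesis unfolding q0 q1 p1 hb2 by (simp add: algebra_simps)
  qed
  also have "\<dots> = (y+1+a-b) * hS N a b (Suc n) ((y+1)^2)" by simp
  finally show ?case using A by simp
qed




definition tt :: "real \<Rightarrow> nat \<Rightarrow> nat \<Rightarrow> real" where
  "tt a J i = 8*(a+1+2*real i)*(real i - real J)"
definition XX :: "real \<Rightarrow> real \<Rightarrow> real \<Rightarrow> real" where
  "XX a b x = (a+b+4*x+2)^2"
definition EE :: "real \<Rightarrow> real \<Rightarrow> nat \<Rightarrow> real \<Rightarrow> real" where
  "EE a b j X = (\<Prod>i<j. (X - XX a b (real i)))"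
definition cc :: "real \<Rightarrow> nat \<Rightarrow> nat \<Rightarrow> nat \<Rightarrow> real" where
  "cc a J n j = real (n choose j) * (\<Prod>i\<in>{j..<n}. tt a J i)"
definition KK :: "nat \<Rightarrow> real \<Rightarrow> real \<Rightarrow> nat \<Rightarrow> real" where
  "KK N a b m = (a-b)^2 + hu N a b (2*m) + hu N a b (2*m+1)"
definition VV :: "nat \<Rightarrow> real \<Rightarrow> real \<Rightarrow> nat \<Rightarrow> real" where
  "VV N a b m = hu N a b (2*m) * hu N a b (2*m-1)"

lemma R_rec: "hR N a b (Suc m) X = (X - KK N a b m) * hR N a b m X - VV N a b m * hR N a b (m-1) X"
proof (cases m)
  case 0 then show ?thesis by (simp add: KK_def VV_def hu_def)
next
  case (Suc k)
  have e: "2 * m = 2*k+2" "2*m+1 = Suc (Suc (Suc (2*k)))" "2*m - 1 = 2*k+1" "2*k+3 = Suc (Suc (Suc (2*k)))" using Suc by auto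
  show ?thesis unfolding KK_def VV_def e Suc hR.simps by simp
qed

lemma hu_ev: "N = Suc (2*J) \<Longrightarrow> hu N a b (2*m) = 8*real m*(2*real J+2-2*real m)"
  by (simp add: hu_def)
lemma hu_od: "N = Suc (2*J) \<Longrightarrow> hu N a b (2*m+1) = 4*(a+2*real m+1)*(b+2*real J+1-2*real m)"
  by (simp add: hu_def algebra_simps)
lemma hu_od': "N = Suc (2*J) \<Longrightarrow> m \<ge> 1 \<Longrightarrow> hu N a b (2*m-1) = 4*(a+2*real m-1)*(b+2*real J+3-2*real m)"
proof -
  assume N: "N = Suc (2*J)" and m: "m \<ge> 1"
  have "2*m - 1 = 2*(m-1)+1" using m by simp
  then have "hu N a b (2*m-1) = 4*(a+2*real (m-1)+1)*(b+2*real J+1-2*real (m-1))" using hu_od[OF N] by metis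
  then show ?thesis using m by (simp add: of_nat_diff algebra_simps)
qed

lemma core_id:
  fixes a b x y J :: real
  shows "(x+1)*(8*(a+1+2*x)*(x-J)) = y*(8*(a+1+2*(y-1))*((y-1)-J))
     + (x+1-y)*((a+b+4*y+2)^2 - ((a-b)^2 + 8*x*(2*J+2-2*x) + 4*(a+2*x+1)*(b+2*J+1-2*x)))
     + 8*(x+1-y)*(x-y)*(b+2*J+3-2*x)"
  by (simp add: algebra_simps power2_eq_square)

lemma VV_eq: "N = Suc (2*J) \<Longrightarrow> VV N a b m = -8*real m*(b+2*real J+3-2*real m) * tt a J (m-1)"
proof (cases "m = 0")
  case True then show ?thesis by (simp add: VV_def hu_def)
next
  case False
  assume N: "N = Suc (2*J)"
  have e1: "hu N a b (2*m) = 8*real m*(2*real J+2-2*real m)" using hu_ev[OF N] .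
  have e2: "hu N a b (2*m-1) = 4*(a+2*real m-1)*(b+2*real J+3-2*real m)" using hu_od'[OF N] False by simp
  have e3: "real (m - 1) = real m - 1" using False by (simp add: of_nat_diff)
  show ?thesis unfolding VV_def e1 e2 tt_def e3 by (simp add: algebra_simps)
qed

lemma KK_eq: "N = Suc (2*J) \<Longrightarrow> KK N a b m = (a-b)^2 + 8*real m*(2*real J+2-2*real m) + 4*(a+2*real m+1)*(b+2*real J+1-2*real m)"
  unfolding KK_def using hu_ev hu_od by simp




lemma coef_mid:
  fixes C1 C2 C3 C4 B0 tm tj W Z m j :: real
  assumes j: "j > 0" and mj: "m + 1 - j > 0"
    and A1: "(m+1-j)*C1 = (m+1)*C3" and A2: "(m+1-j)*C2 = m*B0"
    and A3: "j*C3 = m*B0" and A4: "j*C4 = (m-j)*B0"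
    and core: "(m+1)*tm = j*tj + (m+1-j)*W + 8*(m+1-j)*(m-j)*Z"
  shows "C1*tm = C2*tj + W*C3 + 8*m*Z*C4"
proof -
  have nz: "j*(m+1-j) \<noteq> 0" using j mj by simp
  have "j*(m+1-j)*(C1*tm) = j*((m+1-j)*C1)*tm" by (simp add: ac_simps)
  also have "\<dots> = (m+1)*(j*C3)*tm" unfolding A1 by (simp add: ac_simps)
  also have "\<dots> = m*B0*((m+1)*tm)" unfolding A3 by (simp add: ac_simps)
  also have "\<dots> = m*B0*(j*tj + (m+1-j)*W + 8*(m+1-j)*(m-j)*Z)" unfolding core ..
  also have "\<dots> = j*(m*B0)*tj + (m+1-j)*W*(m*B0) + 8*(m+1-j)*m*Z*((m-j)*B0)" by (simp add: algebra_simps)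
  also have "\<dots> = j*((m+1-j)*C2)*tj + (m+1-j)*W*(j*C3) + 8*(m+1-j)*m*Z*(j*C4)" unfolding A2 A3 A4 ..
  also have "\<dots> = j*(m+1-j)*(C2*tj + W*C3 + 8*m*Z*C4)" by (simp add: algebra_simps)
  finally show ?thesis using nz by simp
qed

lemma coef:
  assumes N: "N = Suc (2*J)"
  shows "cc a J (Suc m) j = (if j=0 then 0 else cc a J m (j-1)) + (XX a b (real j) - KK N a b m) * cc a J m j - VV N a b m * cc a J (m-1) j"
proof -
  have core: "(real m+1)*tt a J m = real j*tt a J (j-1) + (real m+1-real j)*(XX a b (real j) - KK N a b m)
     + 8*(real m+1-real j)*(real m-real j)*(b+2*real J+3-2*real m)" if "j \<ge> 1"
  proof -
    have e: "real (j-1) = real j - 1" using that by (simp add: of_nat_diff)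
    show ?thesis unfolding tt_def XX_def KK_eq[OF N] e using core_id[of "real m" a "real J" "real j" b] by simp
  qed
  consider (big) "j > Suc m" | (top) "j = Suc m" | (zero) "j = 0" | (mid) "1 \<le> j" "j \<le> m" by linarith
  then show ?thesis
  proof cases
    case big
    have z: "Suc m choose j = 0" "m choose (j-1) = 0" "m choose j = 0" "(m-1) choose j = 0"
      using big by (simp_all add: binomial_eq_0)
    have "j \<noteq> 0" using big by simp
    then show ?thesis unfolding cc_def z by simp
  next
    case top
    have z: "m choose j = 0" "(m-1) choose j = 0" using top by (simp_all add: binomial_eq_0)
    show ?thesis using top unfolding cc_def z by simp
  next
    case zero
    have core0: "tt a J m = XX a b 0 - KK N a b m + 8*real m*(b+2*real J+3-2*real m)"
    proof -
      have "(real m+1)*tt a J m = (real m+1)*(XX a b 0 - KK N a b m + 8*real m*(b+2*real J+3-2*real m))"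
        unfolding tt_def XX_def KK_eq[OF N] using core_id[of "real m" a "real J" 0 b] by (simp add: algebra_simps)
      then show ?thesis by (metis add_nonneg_pos mult_cancel_left of_nat_0_le_iff zero_less_one not_less_iff_gr_or_eq)
    qed
    show ?thesis
    proof (cases m)
      case 0 then show ?thesis using zero core0 VV_eq[OF N, of a b 0] by (simp add: cc_def)
    next
      case (Suc k)
      have p1: "(\<Prod>i\<in>{0..<Suc m}. tt a J i) = (\<Prod>i\<in>{0..<k}. tt a J i) * tt a J k * tt a J m"
        using Suc by simp
      have p2: "(\<Prod>i\<in>{0..<m}. tt a J i) = (\<Prod>i\<in>{0..<k}. tt a J i) * tt a J k" using Suc by simp
      have mk: "m - 1 = k" using Suc by simp
      have "cc a J (Suc m) j = (\<Prod>i\<in>{0..<k}. tt a J i) * tt a J k * tt a J m" unfolding cc_def p1 zero by simp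
      also have "\<dots> = (XX a b (real j) - KK N a b m) * cc a J m j - VV N a b m * cc a J (m-1) j"
        unfolding cc_def p2 VV_eq[OF N] mk core0 zero by (simp add: algebra_simps)
      finally show ?thesis using zero by simp
    qed
  next
    case mid
    define P where "P = (\<Prod>i\<in>{j..<m}. tt a J i)"
    define B0 where "B0 = real ((m-1) choose (j-1))"
    have L: "cc a J (Suc m) j = real (Suc m choose j) * P * tt a J m"
      unfolding cc_def P_def using mid by simp
    have R1: "cc a J m (j-1) = real (m choose (j-1)) * tt a J (j-1) * P"
    proof -
      have "(\<Prod>i\<in>{j-1..<m}. tt a J i) = tt a J (j-1) * P" unfolding P_def
        using mid prod.atLeast_Suc_lessThan[of "j-1" m "tt a J"] by simp
      then show ?thesis unfolding cc_def by simp
    qed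
    have R2: "cc a J m j = real (m choose j) * P" unfolding cc_def P_def by simp
    have R3: "VV N a b m * cc a J (m-1) j = -8*real m*(b+2*real J+3-2*real m) * real ((m-1) choose j) * P"
    proof (cases "j \<le> m-1")
      case True
      have "P = (\<Prod>i\<in>{j..<m-1}. tt a J i) * tt a J (m-1)" unfolding P_def
        using True mid prod.atLeastLessThan_Suc[of j "m-1" "tt a J"] by simp
      then show ?thesis unfolding cc_def VV_eq[OF N] by simp
    next
      case False
      then have z: "(m-1) choose j = 0" by (simp add: binomial_eq_0)
      show ?thesis unfolding cc_def z by simp
    qed
    have A1: "(real m+1-real j)*real (Suc m choose j) = (real m+1)*real (m choose j)"
    proof -
      have "(Suc m - j) * (Suc m choose j) = Suc m * (m choose j)" using binomial_absorb_comp[of "Suc m" j] by simp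
      then have "real (Suc m - j) * real (Suc m choose j) = real (Suc m) * real (m choose j)"
        by (metis of_nat_mult)
      moreover have "real (Suc m - j) = real m + 1 - real j" using mid by (simp add: of_nat_diff)
      ultimately show ?thesis by simp
    qed
    have A2: "(real m+1-real j)*real (m choose (j-1)) = real m*B0"
    proof -
      have "(m - (j-1)) * (m choose (j-1)) = m * ((m-1) choose (j-1))" using binomial_absorb_comp[of m "j-1"] by simp
      then have "real (m - (j-1)) * real (m choose (j-1)) = real m * real ((m-1) choose (j-1))"
        by (metis of_nat_mult)
      moreover have "real (m - (j-1)) = real m + 1 - real j" using mid by (simp add: of_nat_diff)
      ultimately show ?thesis unfolding B0_def by (simp add: algebra_simps)
    qed
    have A3: "real j*real (m choose j) = real m*B0"
    proof -
      have "j * (m choose j) = m * ((m-1) choose (j-1))" using times_binomial_minus1_eq[of j m] mid by simp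
      then have "real (j * (m choose j)) = real (m * ((m-1) choose (j-1)))" by simp
      then show ?thesis unfolding B0_def by simp
    qed
    have A4: "real j*real ((m-1) choose j) = (real m-real j)*B0"
    proof -
      obtain m' j' where mm: "m = Suc m'" and jj: "j = Suc j'" using mid by (metis Suc_pred' less_le_trans zero_less_one)
      have pas: "m choose j = (m' choose j') + (m' choose j)" using mm jj by simp
      have "real j * real (m choose j) = real j * real (m' choose j') + real j * real ((m-1) choose j)"
        using pas mm by (simp add: algebra_simps)
      then show ?thesis using A3 mm jj unfolding B0_def by (simp add: algebra_simps)
    qed
    have cm: "real (Suc m choose j) * tt a J m = real (m choose (j-1)) * tt a J (j-1)
        + (XX a b (real j) - KK N a b m) * real (m choose j) + 8*real m*(b+2*real J+3-2*real m) * real ((m-1) choose j)"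
      using coef_mid[OF _ _ A1 A2 A3 A4 core] mid by simp
    have cmP: "P * (real (Suc m choose j) * tt a J m) = P * (real (m choose (j-1)) * tt a J (j-1)
        + (XX a b (real j) - KK N a b m) * real (m choose j) + 8*real m*(b+2*real J+3-2*real m) * real ((m-1) choose j))"
      using cm by simp
    have jn: "j \<noteq> 0" using mid by simp
    show ?thesis unfolding L R1 R2 R3 using jn cmP by (simp add: algebra_simps)
  qed
qed




lemma EE_Suc: "EE a b (Suc j) X = EE a b j X * (X - XX a b (real j))"
  unfolding EE_def by simp

lemma cc_zero: "n < j \<Longrightarrow> cc a J n j = 0"
  unfolding cc_def by simp

lemma sum_ext: assumes "n < L" shows "(\<Sum>j<L. cc a J n j * f j) = (\<Sum>j<Suc n. cc a J n j * f j)"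
proof -
  have "(\<Sum>j<L. cc a J n j * f j) = (\<Sum>j\<in>{..<Suc n}. cc a J n j * f j)"
    by (rule sum.mono_neutral_right) (use assms cc_zero in auto)
  then show ?thesis .
qed

lemma newton:
  assumes N: "N = Suc (2*J)"
  shows "n < L \<Longrightarrow> hR N a b n X = (\<Sum>j<L. cc a J n j * EE a b j X)"
proof (induction n arbitrary: L rule: less_induct)
  case (less n)
  show ?case
  proof (cases n)
    case 0
    have "(\<Sum>j<L. cc a J n j * EE a b j X) = (\<Sum>j<Suc 0. cc a J 0 j * EE a b j X)"
      using sum_ext[of 0 L] less.prems 0 by simp
    then show ?thesis using 0 by (simp add: cc_def EE_def)
  next
    case (Suc m)
    define E where "E = (\<lambda>j. EE a b j X)"
    define K where "K = KK N a b m"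
    define V where "V = VV N a b m"
    have IH1: "hR N a b m X = (\<Sum>j<Suc (Suc m). cc a J m j * E j)"
      using less.IH[of m "Suc (Suc m)"] Suc unfolding E_def by simp
    have IH2: "hR N a b (m-1) X = (\<Sum>j<Suc (Suc m). cc a J (m-1) j * E j)"
      using less.IH[of "m-1" "Suc (Suc m)"] Suc unfolding E_def by simp
    have s1: "(\<Sum>j<Suc (Suc m). (if j=0 then 0 else cc a J m (j-1)) * E j) = (\<Sum>j<Suc m. cc a J m j * E (Suc j))"
      by (subst sum.lessThan_Suc_shift) simp
    have s2: "(\<Sum>j<Suc (Suc m). cc a J m j * E (Suc j)) = (\<Sum>j<Suc m. cc a J m j * E (Suc j))"
      using cc_zero[of m "Suc m" a J] by simp
    have xE: "X * E j = E (Suc j) + XX a b (real j) * E j" for j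
      unfolding E_def EE_Suc by (simp add: algebra_simps)
    have "hR N a b n X = (X - K) * hR N a b m X - V * hR N a b (m-1) X"
      unfolding Suc K_def V_def by (rule R_rec)
    also have "\<dots> = (\<Sum>j<Suc (Suc m). cc a J m j * (X * E j)) - (\<Sum>j<Suc (Suc m). K * cc a J m j * E j)
        - (\<Sum>j<Suc (Suc m). V * cc a J (m-1) j * E j)"
    proof -
      have "(X - K) * (\<Sum>j<Suc (Suc m). cc a J m j * E j) = (\<Sum>j<Suc (Suc m). cc a J m j * (X * E j) - K * cc a J m j * E j)"
        unfolding sum_distrib_left by (rule sum.cong) (simp_all add: algebra_simps)
      moreover have "V * (\<Sum>j<Suc (Suc m). cc a J (m-1) j * E j) = (\<Sum>j<Suc (Suc m). V * cc a J (m-1) j * E j)"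
        unfolding sum_distrib_left by (rule sum.cong) (simp_all add: algebra_simps)
      ultimately show ?thesis unfolding IH1 IH2 sum_subtractf by simp
    qed
    also have "\<dots> = (\<Sum>j<Suc (Suc m). cc a J m j * E (Suc j)) + (\<Sum>j<Suc (Suc m). (XX a b (real j) - K) * cc a J m j * E j)
        - (\<Sum>j<Suc (Suc m). V * cc a J (m-1) j * E j)"
      unfolding xE by (simp add: sum.distrib sum_subtractf algebra_simps)
    also have "\<dots> = (\<Sum>j<Suc (Suc m). (if j=0 then 0 else cc a J m (j-1)) * E j) + (\<Sum>j<Suc (Suc m). (XX a b (real j) - K) * cc a J m j * E j)
        - (\<Sum>j<Suc (Suc m). V * cc a J (m-1) j * E j)"
      unfolding s1 s2 ..
    also have "\<dots> = (\<Sum>j<Suc (Suc m). (if j=0 then 0 else cc a J m (j-1)) * E j + (XX a b (real j) - K) * cc a J m j * E j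
        - V * cc a J (m-1) j * E j)"
      by (simp add: sum.distrib sum_subtractf)
    also have "\<dots> = (\<Sum>j<Suc (Suc m). cc a J (Suc m) j * E j)"
    proof (rule sum.cong[OF refl])
      fix j
      show "(if j=0 then 0 else cc a J m (j-1)) * E j + (XX a b (real j) - K) * cc a J m j * E j
        - V * cc a J (m-1) j * E j = cc a J (Suc m) j * E j"
        by (simp add: coef[OF N, where b=b] K_def V_def ring_distribs)
    qed
    also have "\<dots> = (\<Sum>j<L. cc a J n j * E j)"
      using sum_ext[of n L a J E] less.prems Suc by simp
    finally show ?thesis unfolding E_def .
  qed
qed




definition Exx :: "real \<Rightarrow> real \<Rightarrow> nat \<Rightarrow> real \<Rightarrow> real" where
  "Exx a b j x = EE a b j (XX a b x)"

lemma XX_diff: "XX a b x - XX a b y = 16*(x-y)*(x+y+(1+(a+b)/2))"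
  unfolding XX_def by (simp add: power2_eq_square field_simps)

lemma Ex_Suc: "Exx a b (Suc j) x = Exx a b j x * (16*(x-real j)*(x+real j+(1+(a+b)/2)))"
  unfolding Exx_def EE_Suc XX_diff ..

lemma Ex_Suc': "g = 1+(a+b)/2 \<Longrightarrow> Exx a b (Suc j) x = Exx a b j x * (16*(x-real j)*(x+real j+g))"
  using Ex_Suc by simp

lemma Ex_0[simp]: "Exx a b 0 x = 1" unfolding Exx_def EE_def by simp

lemma e2: "(x+g) * Exx a b (Suc j) (x+1) = 16*(x+1)*(x+real j+g)*(x+real j+1+g) * Exx a b j x"
  if "g = 1+(a+b)/2" for g
proof (induction j)
  case 0 then show ?case unfolding Ex_Suc'[OF that] by (simp add: algebra_simps)
next
  case (Suc j)
  have "(x+g) * Exx a b (Suc (Suc j)) (x+1) = ((x+g) * Exx a b (Suc j) (x+1)) * (16*(x+1-real (Suc j))*(x+1+real (Suc j)+g))"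
    unfolding Ex_Suc'[OF that, of "Suc j"] by (simp add: algebra_simps)
  also have "\<dots> = 16*(x+1)*(x+real j+g)*(x+real j+1+g) * Exx a b j x * (16*(x+1-real (Suc j))*(x+1+real (Suc j)+g))"
    unfolding Suc ..
  also have "\<dots> = 16*(x+1)*(x+real (Suc j)+g)*(x+real (Suc j)+1+g) * Exx a b (Suc j) x"
    unfolding Ex_Suc'[OF that, of j] by (simp add: algebra_simps)
  finally show ?case .
qed

lemma e3: "x * Exx a b (Suc j) (x-1) = 16*(x-real j-1)*(x-real j)*(x+g-1) * Exx a b j x"
  if "g = 1+(a+b)/2" for g
proof (induction j)
  case 0 then show ?case unfolding Ex_Suc'[OF that] by (simp add: algebra_simps)
next
  case (Suc j)
  have "x * Exx a b (Suc (Suc j)) (x-1) = (x * Exx a b (Suc j) (x-1)) * (16*(x-1-real (Suc j))*(x-1+real (Suc j)+g))"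
    unfolding Ex_Suc'[OF that, of "Suc j"] by (simp add: algebra_simps)
  also have "\<dots> = 16*(x-real j-1)*(x-real j)*(x+g-1) * Exx a b j x * (16*(x-1-real (Suc j))*(x-1+real (Suc j)+g))"
    unfolding Suc ..
  also have "\<dots> = 16*(x-real (Suc j)-1)*(x-real (Suc j))*(x+g-1) * Exx a b (Suc j) x"
    unfolding Ex_Suc'[OF that, of j] by (simp add: algebra_simps)
  finally show ?case .
qed

definition Bf :: "real \<Rightarrow> real \<Rightarrow> nat \<Rightarrow> real \<Rightarrow> real" where
  "Bf a b J x = ((a+1)/2+x)*(x+(1+(a+b)/2))*(real J-x)/((2*x+(1+(a+b)/2))*(2*x+(1+(a+b)/2)+1))"
definition Df :: "real \<Rightarrow> real \<Rightarrow> nat \<Rightarrow> real \<Rightarrow> real" where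
  "Df a b J x = x*(x+(1+(a+b)/2)+real J)*(x+(b+1)/2)/((2*x+(1+(a+b)/2)-1)*(2*x+(1+(a+b)/2)))"

lemma core2:
  fixes p d x J jj :: real
  shows "(p+x)*(J-x)*(16*(x+1)*(x+jj+(p+d))*(x+jj+1+(p+d)) - (x+(p+d))*(16*(x-jj)*(x+jj+(p+d))))*(2*x+(p+d)-1)
     - (x+(p+d)+J)*(x+d)*(x*(16*(x-jj)*(x+jj+(p+d))) - 16*(x-jj-1)*(x-jj)*(x+(p+d)-1))*(2*x+(p+d)+1)
     = -(jj+1)*(16*(x-jj)*(x+jj+(p+d)) + 16*(p+jj)*(jj-J))*((2*x+(p+d)-1)*(2*x+(p+d))*(2*x+(p+d)+1))"
  by algebra

lemma frac_comb: fixes u v w A B :: real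
  shows "u \<noteq> 0 \<Longrightarrow> v \<noteq> 0 \<Longrightarrow> w \<noteq> 0 \<Longrightarrow> A/(u*v) - B/(w*u) = (A*w - B*v)/(w*u*v)"
  by (simp add: field_simps)

lemma Dop_id:
  fixes x g a b J jj E0 F1 F0 Fm :: real
  assumes g: "g = 1+(a+b)/2" and gp: "g > 0" and x: "x \<ge> 1"
    and F1: "(x+g)*F1 = 16*(x+1)*(x+jj+g)*(x+jj+1+g)*E0"
    and F0: "F0 = E0 * (16*(x-jj)*(x+jj+g))"
    and Fm: "x*Fm = 16*(x-jj-1)*(x-jj)*(x+g-1)*E0"
  shows "((a+1)/2+x)*(x+g)*(J-x)/((2*x+g)*(2*x+g+1)) * (F1 - F0)
        - x*(x+g+J)*(x+(b+1)/2)/((2*x+g-1)*(2*x+g)) * (F0 - Fm)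
       = -(jj+1) * (F0 + 8*(a+1+2*jj)*(jj-J) * E0)"
proof -
  define p where "p = (a+1)/2"
  define d where "d = (b+1)/2"
  have gpd: "g = p+d" unfolding p_def d_def g by (simp add: field_simps)
  have ap: "8*(a+1+2*jj)*(jj-J) = 16*(p+jj)*(jj-J)" unfolding p_def by (simp add: field_simps)
  define p0 where "p0 = 16*(x-jj)*(x+jj+g)"
  define P1 where "P1 = 16*(x+1)*(x+jj+g)*(x+jj+1+g)"
  define Pm where "Pm = 16*(x-jj-1)*(x-jj)*(x+g-1)"
  have n1: "x+g \<noteq> 0" "2*x+g \<noteq> 0" "2*x+g+1 \<noteq> 0" "2*x+g-1 \<noteq> 0" "x \<noteq> 0" using gp x by auto
  have T1: "(p+x)*(x+g)*(J-x)/((2*x+g)*(2*x+g+1)) * (F1 - F0) = (p+x)*(J-x)*(P1 - (x+g)*p0)*E0/((2*x+g)*(2*x+g+1))"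
  proof -
    have "(x+g)*(F1 - F0) = (P1 - (x+g)*p0)*E0" unfolding P1_def p0_def F0 using F1 by (simp add: algebra_simps)
    then show ?thesis by (simp add: ac_simps)
  qed
  have T2: "x*(x+g+J)*(x+d)/((2*x+g-1)*(2*x+g)) * (F0 - Fm) = (x+g+J)*(x+d)*(x*p0 - Pm)*E0/((2*x+g-1)*(2*x+g))"
  proof -
    have "x*(F0 - Fm) = (x*p0 - Pm)*E0" unfolding Pm_def p0_def F0 using Fm by (simp add: algebra_simps)
    then show ?thesis by (simp add: ac_simps)
  qed
  have comb: "(p+x)*(J-x)*(P1 - (x+g)*p0)*E0/((2*x+g)*(2*x+g+1)) - (x+g+J)*(x+d)*(x*p0 - Pm)*E0/((2*x+g-1)*(2*x+g))
     = E0 * (((p+x)*(J-x)*(P1 - (x+g)*p0)*(2*x+g-1) - (x+g+J)*(x+d)*(x*p0 - Pm)*(2*x+g+1)) / ((2*x+g-1)*(2*x+g)*(2*x+g+1)))"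
    using frac_comb[OF n1(2) n1(3) n1(4), of "(p+x)*(J-x)*(P1 - (x+g)*p0)*E0" "(x+g+J)*(x+d)*(x*p0 - Pm)*E0"]
    by (simp add: algebra_simps)
  have c2: "(p+x)*(J-x)*(P1 - (x+g)*p0)*(2*x+g-1) - (x+g+J)*(x+d)*(x*p0 - Pm)*(2*x+g+1)
     = -(jj+1)*(p0 + 16*(p+jj)*(jj-J))*((2*x+g-1)*(2*x+g)*(2*x+g+1))"
    unfolding P1_def p0_def Pm_def gpd by (rule core2)
  have "((a+1)/2+x)*(x+g)*(J-x)/((2*x+g)*(2*x+g+1)) * (F1 - F0)
        - x*(x+g+J)*(x+(b+1)/2)/((2*x+g-1)*(2*x+g)) * (F0 - Fm)
      = E0 * (-(jj+1)*(p0 + 16*(p+jj)*(jj-J)))"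
  proof -
    have nz: "(2*x+g-1)*(2*x+g)*(2*x+g+1) \<noteq> 0" using n1 by simp
    show ?thesis unfolding p_def[symmetric] d_def[symmetric] T1 T2 comb c2 using nz by simp
  qed
  also have "\<dots> = -(jj+1) * (F0 + 8*(a+1+2*jj)*(jj-J) * E0)"
    unfolding ap F0 p0_def by (simp add: algebra_simps)
  finally show ?thesis .
qed




lemma telescope:
  fixes nu B D F :: "nat \<Rightarrow> real"
  assumes db: "\<And>k. k < J \<Longrightarrow> nu k * B k = nu (Suc k) * D (Suc k)" and BJ: "B J = 0" and D0: "D 0 = 0"
  shows "(\<Sum>k\<le>J. nu k * (B k * (F (Suc k) - F k) - D k * (F k - F (k-1)))) = 0"
proof -
  have split: "(\<Sum>k\<le>J. nu k * (B k * (F (Suc k) - F k) - D k * (F k - F (k-1))))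
     = (\<Sum>k\<le>J. nu k * B k * (F (Suc k) - F k)) - (\<Sum>k\<le>J. nu k * D k * (F k - F (k-1)))"
    by (simp add: sum_subtractf[symmetric] algebra_simps)
  show ?thesis
  proof (cases J)
    case 0 then show ?thesis using BJ D0 by simp
  next
    case (Suc J')
    have s1: "(\<Sum>k\<le>J. nu k * B k * (F (Suc k) - F k)) = (\<Sum>k\<le>J'. nu k * B k * (F (Suc k) - F k))"
      using Suc BJ by simp
    have s2: "(\<Sum>k\<le>J. nu k * D k * (F k - F (k-1))) = (\<Sum>k\<le>J'. nu (Suc k) * D (Suc k) * (F (Suc k) - F k))"
      unfolding Suc sum.atMost_Suc_shift using D0 by simp
    have s3: "(\<Sum>k\<le>J'. nu (Suc k) * D (Suc k) * (F (Suc k) - F k)) = (\<Sum>k\<le>J'. nu k * B k * (F (Suc k) - F k))"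
      by (rule sum.cong[OF refl]) (use db Suc in auto)
    show ?thesis unfolding split s1 s2 s3 by simp
  qed
qed

lemma Ex_zero0: "Exx a b (Suc j) 0 = 0"
proof (induction j)
  case 0 then show ?case by (simp add: Ex_Suc)
next
  case (Suc j) then show ?case by (simp add: Ex_Suc[of a b "Suc j"])
qed

lemma grid_D:
  assumes gp: "1+(a+b)/2 > 0"
  shows "Bf a b J (real k) * (Exx a b (Suc j) (real (Suc k)) - Exx a b (Suc j) (real k))
       - Df a b J (real k) * (Exx a b (Suc j) (real k) - Exx a b (Suc j) (real (k-1)))
       = -(real j+1)*(Exx a b (Suc j) (real k) + tt a J j * Exx a b j (real k))"
proof (cases k)
  case 0
  have D0: "Df a b J 0 = 0" unfolding Df_def by simp
  show ?thesis
  proof (cases j)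
    case 0
    define g where "g = 1+(a+b)/2"
    have gp': "g > 0" using gp unfolding g_def .
    have e11: "Exx a b (Suc 0) 1 = 16*(1+g)" using Ex_Suc'[OF g_def, of 0 1] by simp
    have e10: "Exx a b (Suc 0) 0 = 0" using Ex_zero0 by simp
    have "Bf a b J 0 = (((a+1)/2)*real J)*g/((g+1)*g)" unfolding Bf_def g_def[symmetric] by (simp add: ac_simps)
    also have "\<dots> = ((a+1)/2)*real J/(g+1)" using gp' by (rule nonzero_mult_divide_mult_cancel_right[OF less_imp_neq[symmetric]])
    finally have bf: "Bf a b J 0 = ((a+1)/2)*real J/(g+1)" .
    have "Bf a b J 0 * (Exx a b (Suc 0) 1) = -(Exx a b (Suc 0) 0 + tt a J 0)"
    proof -
      have "g+1 \<noteq> 0" using gp' by simp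
      then show ?thesis unfolding bf e11 e10 tt_def by (simp add: field_simps)
    qed
    then show ?thesis using 0 \<open>k=0\<close> D0 e10 by simp
  next
    case (Suc j')
    have z0: "Exx a b j 0 = 0" "Exx a b (Suc j) 0 = 0" using Suc Ex_zero0 by auto
    have "(0+(1+(a+b)/2)) * Exx a b (Suc j) (0+1) = 16*(0+1)*(0+real j+(1+(a+b)/2))*(0+real j+1+(1+(a+b)/2)) * Exx a b j 0"
      by (rule e2) simp
    then have z1: "Exx a b (Suc j) 1 = 0" using z0 gp by simp
    show ?thesis using \<open>k=0\<close> D0 z0 z1 by simp
  qed
next
  case (Suc k')
  define x where "x = real k"
  have x1: "x \<ge> 1" unfolding x_def using Suc by simp
  have r1: "real (Suc k) = x + 1" "real (k-1) = x - 1" unfolding x_def using Suc by auto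
  have F1: "(x+(1+(a+b)/2)) * Exx a b (Suc j) (x+1) = 16*(x+1)*(x+real j+(1+(a+b)/2))*(x+real j+1+(1+(a+b)/2)) * Exx a b j x"
    by (rule e2) simp
  have Fm: "x * Exx a b (Suc j) (x-1) = 16*(x-real j-1)*(x-real j)*(x+(1+(a+b)/2)-1) * Exx a b j x"
    by (rule e3) simp
  have F0: "Exx a b (Suc j) x = Exx a b j x * (16*(x-real j)*(x+real j+(1+(a+b)/2)))"
    by (rule Ex_Suc)
  have "Bf a b J x * (Exx a b (Suc j) (x+1) - Exx a b (Suc j) x) - Df a b J x * (Exx a b (Suc j) x - Exx a b (Suc j) (x-1))
     = -(real j+1)*(Exx a b (Suc j) x + 8*(a+1+2*real j)*(real j-real J) * Exx a b j x)"
    unfolding Bf_def Df_def by (rule Dop_id[OF refl gp x1 F1 F0 Fm])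
  then show ?thesis unfolding r1 tt_def x_def by simp
qed




definition cw :: "nat \<Rightarrow> nat \<Rightarrow> real" where
  "cw J k = (-1)^k * pochhammer (- real J) k / fact k"

lemma cw_Suc: "cw J (Suc k) = cw J k * (real J - real k)/(real k + 1)"
  unfolding cw_def by (simp add: pochhammer_Suc field_simps)

lemma cw_pos: "k \<le> J \<Longrightarrow> cw J k > 0"
proof -
  assume k: "k \<le> J"
  have "pochhammer (- real J) k = (-1)^k * pochhammer (real J - real k + 1) k" by (rule pochhammer_minus)
  moreover have "pochhammer (real J - real k + 1) k > 0" using k by (intro pochhammer_pos) simp
  ultimately show ?thesis unfolding cw_def by simp
qed

lemma cw_J: "cw J J = 1"
proof -
  have "pochhammer (- real J) J = (-1)^J * pochhammer (real J - real J + 1) J" by (rule pochhammer_minus)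
  then have "pochhammer (- real J) J = (-1)^J * fact J" by (simp add: pochhammer_fact)
  then show ?thesis unfolding cw_def by simp
qed

lemma db_abs:
  fixes c P Q k J y d g G :: real
  assumes "Q \<noteq> 0" "y > 0" "d > 0" "g > 0" "k \<ge> 0" "G = J + 1 + g" "J \<ge> 0"
  shows "(c*P/Q*((2*k+g)/(d+k))) * ((y+k)*(k+g)*(J-k)/((2*k+g)*(2*k+g+1)))
    = (c*(J-k)/(k+1) * (P*((y+k)*(g+k))) / (Q*((d+k)*(G+k))) * ((2*(k+1)+g)/(d+(k+1))))
       * ((k+1)*((k+1)+g+J)*((k+1)+d)/((2*(k+1)+g-1)*(2*(k+1)+g)))"
proof -
  have G: "G + k = (k+1)+g+J" using assms by simp
  have nz: "d+k \<noteq> 0" "2*k+g \<noteq> 0" "2*k+g+1 \<noteq> 0" "k+1 \<noteq> 0" "(k+1)+g+J \<noteq> 0" "d+(k+1) \<noteq> 0"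
     "2*(k+1)+g \<noteq> 0" using assms by auto
  have e: "2*(k+1)+g-1 = 2*k+g+1" by simp
  define M where "M = c*P*(y+k)*(k+g)*(J-k)/(Q*(d+k)*(2*k+g+1))"
  have L: "(c*P/Q*((2*k+g)/(d+k))) * ((y+k)*(k+g)*(J-k)/((2*k+g)*(2*k+g+1))) = M"
    unfolding M_def using nz assms(1) by (simp add: divide_simps)
  have R: "(c*(J-k)/(k+1) * (P*((y+k)*(g+k))) / (Q*((d+k)*((k+1)+g+J))) * ((2*(k+1)+g)/(d+(k+1))))
       * ((k+1)*((k+1)+g+J)*((k+1)+d)/((2*k+g+1)*(2*(k+1)+g))) = M"
    unfolding M_def using nz assms(1) by (simp add: divide_simps) (simp add: algebra_simps)
  show ?thesis unfolding G e L R ..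
qed

lemma cancel_abs: fixes A B C D E F Z :: real
  shows "C \<noteq> 0 \<Longrightarrow> D \<noteq> 0 \<Longrightarrow> E \<noteq> 0 \<Longrightarrow> A*B/(C*D)/E*Z*(F*D) = (B*F)/(C*E)*(A*Z)"
  by (simp add: field_simps)

lemma add_frac: fixes A y z :: real shows "z \<noteq> 0 \<Longrightarrow> A + A*(y/z) = A*((z+y)/z)"
  by (simp add: field_simps)

context
  fixes N J :: nat and a b :: real
  assumes NJ: "N = Suc (2*J)" and ap: "a > -1" and bp: "b > -1"
begin

definition "ga = 1/2 + a/2"
definition "de = 1/2 + b/2"
definition "gg = 1 + (a+b)/2"
definition "G2 = real N / 2 + 3/2 + (a+b)/2"
definition "PP k = pochhammer ga k * pochhammer gg k"
definition "QQ k = pochhammer de k * pochhammer G2 k"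

lemma pos: "ga > 0" "de > 0" "gg > 0" "G2 > 0" "gg = ga + de" "G2 = real J + 1 + gg"
  unfolding ga_def de_def gg_def G2_def using ap bp NJ by (auto simp: field_simps)

lemma QQ_pos: "QQ k > 0" unfolding QQ_def using pos by (simp add: pochhammer_pos)
lemma PP_pos: "PP k > 0" unfolding PP_def using pos by (simp add: pochhammer_pos)

lemma hw_ev: "hw N a b (2*k) = cw J k * PP k / QQ k"
proof -
  have e: "- (real N - 1) / 2 = - real J" unfolding NJ by simp
  show ?thesis unfolding hw_def Let_def PP_def QQ_def ga_def gg_def de_def G2_def cw_def e by simp
qed

lemma hw_od: "hw N a b (Suc (2*k)) = cw J k * PP k / QQ k * ((ga + real k)/(de + real k))"
proof -
  have e: "- (real N - 1) / 2 = - real J" unfolding NJ by simp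
  have "hw N a b (Suc (2*k)) = cw J k * (PP k * (ga + real k)) / (QQ k * (de + real k))"
    unfolding hw_def Let_def PP_def QQ_def ga_def gg_def de_def G2_def cw_def e by (simp add: pochhammer_Suc ac_simps)
  then show ?thesis by simp
qed

lemma hw_pos: "k \<le> J \<Longrightarrow> hw N a b (2*k) > 0 \<and> hw N a b (Suc (2*k)) > 0"
proof -
  assume k: "k \<le> J"
  have A: "cw J k * PP k / QQ k > 0" using cw_pos[OF k] QQ_pos PP_pos by simp
  have B: "(ga + real k)/(de + real k) > 0" using pos by simp
  show ?thesis unfolding hw_ev hw_od using A mult_pos_pos[OF A B] by simp
qed

definition "nu k = hw N a b (2*k) + hw N a b (Suc (2*k))"

lemma nu_eq: "nu k = cw J k * PP k / QQ k * ((2*real k + gg)/(de + real k))"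
proof -
  have "de + real k > 0" using pos by simp
  then have "cw J k * PP k / QQ k + cw J k * PP k / QQ k * ((ga + real k)/(de + real k))
     = cw J k * PP k / QQ k * (((de + real k) + (ga + real k))/(de + real k))"
    using add_frac[of "de + real k" "cw J k * PP k / QQ k" "ga + real k"] by simp
  moreover have "(de + real k) + (ga + real k) = 2*real k + gg" using pos(5) by simp
  ultimately show ?thesis unfolding nu_def hw_ev hw_od by simp
qed

lemma PP_Suc: "PP (Suc k) = PP k * ((ga + real k)*(gg + real k))" unfolding PP_def by (simp add: pochhammer_Suc)
lemma QQ_Suc: "QQ (Suc k) = QQ k * ((de + real k)*(G2 + real k))" unfolding QQ_def by (simp add: pochhammer_Suc)

lemma detailed_balance: "nu k * Bf a b J (real k) = nu (Suc k) * Df a b J (real (Suc k))"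
proof -
  have B: "Bf a b J (real k) = (ga+real k)*(real k+gg)*(real J-real k)/((2*real k+gg)*(2*real k+gg+1))"
    unfolding Bf_def ga_def gg_def by (simp add: field_simps)
  have D: "Df a b J (real (Suc k)) = (real k+1)*((real k+1)+gg+real J)*((real k+1)+de)/((2*(real k+1)+gg-1)*(2*(real k+1)+gg))"
    unfolding Df_def de_def gg_def by (simp add: field_simps)
  have rs: "real (Suc k) = real k + 1" by simp
  have n2: "nu (Suc k) = cw J k * (real J - real k)/(real k + 1) * (PP k * ((ga + real k)*(gg + real k))) / (QQ k * ((de + real k)*(G2 + real k)))
      * ((2*(real k+1) + gg)/(de + (real k+1)))"
    unfolding nu_eq cw_Suc PP_Suc QQ_Suc rs by simp
  have "nu k * Bf a b J (real k) = (cw J k * PP k / QQ k*((2*real k+gg)/(de+real k))) * ((ga+real k)*(real k+gg)*(real J-real k)/((2*real k+gg)*(2*real k+gg+1)))"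
    unfolding B nu_eq ..
  also have "\<dots> = (cw J k * (real J - real k)/(real k + 1) * (PP k * ((ga + real k)*(gg + real k))) / (QQ k * ((de + real k)*(G2 + real k)))
      * ((2*(real k+1) + gg)/(de + (real k+1)))) * ((real k+1)*((real k+1)+gg+real J)*((real k+1)+de)/((2*(real k+1)+gg-1)*(2*(real k+1)+gg)))"
    by (rule db_abs) (use QQ_pos[of k] pos in auto)
  also have "\<dots> = nu (Suc k) * Df a b J (real (Suc k))" unfolding n2 D ..
  finally show ?thesis .
qed


definition "mm j = (\<Sum>k\<le>J. nu k * Exx a b j (real k))"

lemma mm_Suc: "mm (Suc j) = - tt a J j * mm j"
proof -
  have gp: "1+(a+b)/2 > 0" using pos(3) unfolding gg_def .
  have tel: "(\<Sum>k\<le>J. nu k * (Bf a b J (real k) * (Exx a b (Suc j) (real (Suc k)) - Exx a b (Suc j) (real k))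
      - Df a b J (real k) * (Exx a b (Suc j) (real k) - Exx a b (Suc j) (real (k-1))))) = 0"
  proof (rule telescope[where nu=nu and B="\<lambda>k. Bf a b J (real k)" and D="\<lambda>k. Df a b J (real k)"
          and F="\<lambda>k. Exx a b (Suc j) (real k)"])
    fix k assume "k < J"
    show "nu k * Bf a b J (real k) = nu (Suc k) * Df a b J (real (Suc k))" by (rule detailed_balance)
  next
    show "Bf a b J (real J) = 0" by (simp add: Bf_def)
  next
    show "Df a b J (real 0) = 0" by (simp add: Df_def)
  qed
  have "(\<Sum>k\<le>J. nu k * (-(real j+1)*(Exx a b (Suc j) (real k) + tt a J j * Exx a b j (real k)))) = 0"
    using tel unfolding grid_D[OF gp] .
  moreover have "(\<Sum>k\<le>J. nu k * (-(real j+1)*(Exx a b (Suc j) (real k) + tt a J j * Exx a b j (real k))))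
     = (\<Sum>k\<le>J. (-(real j+1)) * (nu k * Exx a b (Suc j) (real k)) + (-(real j+1)*tt a J j) * (nu k * Exx a b j (real k)))"
    by (rule sum.cong) (simp_all add: algebra_simps)
  moreover have "\<dots> = (-(real j+1)) * mm (Suc j) + (-(real j+1)*tt a J j) * mm j"
    unfolding mm_def sum.distrib sum_distrib_left ..
  ultimately have "(real j+1) * (mm (Suc j) + tt a J j * mm j) = 0" by (simp add: algebra_simps)
  moreover have "real j + 1 \<noteq> 0" by simp
  ultimately have "mm (Suc j) + tt a J j * mm j = 0" by simp
  then show ?thesis by (simp add: algebra_simps)
qed

lemma mm_closed: "mm j = mm 0 * (\<Prod>i<j. - tt a J i)"
  by (induction j) (simp_all add: mm_Suc)

lemma Exx_EE: "EE a b j (XX a b (real k)) = Exx a b j (real k)" unfolding Exx_def ..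

lemma MR: assumes n1: "n \<ge> 1" shows "(\<Sum>k\<le>J. nu k * hR N a b n (XX a b (real k))) = 0"
proof -
  have "(\<Sum>k\<le>J. nu k * hR N a b n (XX a b (real k))) = (\<Sum>k\<le>J. \<Sum>j<Suc n. nu k * (cc a J n j * Exx a b j (real k)))"
  proof -
    have hn: "hR N a b n X = (\<Sum>j<Suc n. cc a J n j * EE a b j X)" for X by (rule newton[OF NJ]) simp
    show ?thesis unfolding hn Exx_EE by (simp only: sum_distrib_left)
  qed
  also have "\<dots> = (\<Sum>j<Suc n. cc a J n j * mm j)"
    unfolding mm_def by (subst sum.swap) (simp add: sum_distrib_left ac_simps)
  also have "\<dots> = (\<Sum>j<Suc n. mm 0 * (\<Prod>i<n. tt a J i) * ((-1)^j * real (n choose j)))"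
  proof (rule sum.cong[OF refl])
    fix j assume "j \<in> {..<Suc n}"
    then have jn: "j \<le> n" by simp
    have "(\<Prod>i<j. - tt a J i) = (-1)^j * (\<Prod>i<j. tt a J i)" by (simp add: prod_uminus)
    moreover have "(\<Prod>i<j. tt a J i) * (\<Prod>i\<in>{j..<n}. tt a J i) = (\<Prod>i<n. tt a J i)"
      unfolding lessThan_atLeast0 using prod.atLeastLessThan_concat[of 0 j n "tt a J"] jn by simp
    ultimately show "cc a J n j * mm j = mm 0 * (\<Prod>i<n. tt a J i) * ((-1)^j * real (n choose j))"
      unfolding cc_def mm_closed[of j] by (simp add: algebra_simps)
  qed
  also have "\<dots> = mm 0 * (\<Prod>i<n. tt a J i) * (\<Sum>j\<le>n. (-1)^j * real (n choose j))"
    unfolding sum_distrib_left lessThan_Suc_atMost ..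
  also have "\<dots> = 0" using choose_alternating_sum[of n, where 'a=real] n1 by simp
  finally show ?thesis .
qed

lemma RJ1: assumes k: "k \<le> J" shows "hR N a b (Suc J) (XX a b (real k)) = 0"
proof -
  have "hR N a b (Suc J) (XX a b (real k)) = (\<Sum>j<Suc (Suc J). cc a J (Suc J) j * EE a b j (XX a b (real k)))"
    by (rule newton[OF NJ]) simp
  also have "\<dots> = 0"
  proof (rule sum.neutral, rule ballI)
    fix j assume "j \<in> {..<Suc (Suc J)}"
    then consider "j \<le> J" | "j = Suc J" by fastforce
    then show "cc a J (Suc J) j * EE a b j (XX a b (real k)) = 0"
    proof cases
      case 1
      have "(\<Prod>i\<in>{j..<Suc J}. tt a J i) = 0" by (rule prod_zero) (use 1 in \<open>auto simp: tt_def\<close>)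
      then show ?thesis unfolding cc_def by simp
    next
      case 2
      have "EE a b j (XX a b (real k)) = 0" unfolding EE_def 2 by (rule prod_zero) (use k in auto)
      then show ?thesis by simp
    qed
  qed
  finally show ?thesis .
qed

lemma mm_J: "mm J = nu J * Exx a b J (real J)"
proof -
  have "mm J = (\<Sum>k\<in>{J}. nu k * Exx a b J (real k))"
    unfolding mm_def
  proof (rule sum.mono_neutral_right)
    show "\<forall>i\<in>{..J} - {J}. nu i * Exx a b J (real i) = 0"
    proof
      fix i assume "i \<in> {..J} - {J}"
      then have "i < J" by auto
      then have "Exx a b J (real i) = 0" unfolding Exx_def EE_def by (intro prod_zero) auto
      then show "nu i * Exx a b J (real i) = 0" by simp
    qed
  qed auto
  then show ?thesis by simp
qed

lemma kappa: "mm 0 = pochhammer gg (Suc J) / pochhammer de (Suc J)"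
proof -
  define Z where "Z = (\<Prod>i<J. 16*(real J - real i))"
  have Zp: "Z > 0" unfolding Z_def by (rule prod_pos) auto
  have T: "(\<Prod>i<J. - tt a J i) = pochhammer ga J * Z"
  proof -
    have "(\<Prod>i<J. - tt a J i) = (\<Prod>i<J. (ga + real i) * (16*(real J - real i)))"
      by (rule prod.cong[OF refl]) (simp add: tt_def ga_def algebra_simps)
    then show ?thesis unfolding Z_def pochhammer_prod lessThan_atLeast0 prod.distrib by simp
  qed
  have EJ: "Exx a b J (real J) = Z * pochhammer (real J + gg) J"
  proof -
    have "Exx a b J (real J) = (\<Prod>i<J. (16*(real J - real i)) * (real J + gg + real i))"
      unfolding Exx_def EE_def by (rule prod.cong[OF refl]) (simp add: XX_diff gg_def algebra_simps)
    then show ?thesis unfolding Z_def pochhammer_prod lessThan_atLeast0 prod.distrib by simp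
  qed
  have key: "pochhammer (real J + gg) J * (2*real J + gg) = (real J + gg) * pochhammer G2 J"
  proof -
    have "pochhammer (real J + gg) (Suc J) = pochhammer (real J + gg) J * (real J + gg + real J)" by (rule pochhammer_Suc)
    moreover have "pochhammer (real J + gg) (Suc J) = (real J + gg) * pochhammer (real J + gg + 1) J" by (rule pochhammer_rec)
    moreover have "G2 = real J + gg + 1" using pos(6) by simp
    ultimately show ?thesis by (simp add: algebra_simps)
  qed
  have nuJ: "nu J = pochhammer ga J * pochhammer gg J / (pochhammer de J * pochhammer G2 J) * ((2*real J + gg)/(de + real J))"
    unfolding nu_eq cw_J PP_def QQ_def by simp
  have pg: "pochhammer ga J > 0" "pochhammer de J > 0" "pochhammer G2 J > 0" "de + real J > 0"
    using pos by (auto intro: pochhammer_pos)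
  have "mm 0 * (pochhammer ga J * Z) = mm J" unfolding mm_closed[of J] T by simp
  also have "\<dots> = nu J * (Z * pochhammer (real J + gg) J)" unfolding mm_J EJ ..
  also have "\<dots> = pochhammer ga J * pochhammer gg J / (pochhammer de J * pochhammer G2 J) / (de + real J) * Z
      * (pochhammer (real J + gg) J * (2*real J + gg))" unfolding nuJ by (simp add: algebra_simps)
  also have "\<dots> = pochhammer ga J * pochhammer gg J / (pochhammer de J * pochhammer G2 J) / (de + real J) * Z
      * ((real J + gg) * pochhammer G2 J)" unfolding key ..
  also have "\<dots> = (pochhammer gg J * (gg + real J)) / (pochhammer de J * (de + real J)) * (pochhammer ga J * Z)"
    using cancel_abs[of "pochhammer de J" "pochhammer G2 J" "de + real J" "pochhammer ga J" "pochhammer gg J" Z "real J + gg"] pg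
    by (simp add: ac_simps)
  finally have "mm 0 * (pochhammer ga J * Z) = (pochhammer gg J * (gg + real J)) / (pochhammer de J * (de + real J)) * (pochhammer ga J * Z)" .
  moreover have "pochhammer ga J * Z \<noteq> 0" using pg Zp by simp
  ultimately have "mm 0 = (pochhammer gg J * (gg + real J)) / (pochhammer de J * (de + real J))"
    by (metis mult_right_cancel)
  then show ?thesis by (simp add: pochhammer_Suc)
qed


end



context
  fixes N J :: nat and a b :: real
  assumes NJ: "N = Suc (2*J)" and ap: "a > -1" and bp: "b > -1"
begin

lemma hy_ev: "(hy a b (2*k) + 1)^2 = XX a b (real k)"
  unfolding hy_def XX_def by (simp add: algebra_simps)
lemma hy_od: "(hy a b (Suc (2*k)) + 1)^2 = XX a b (real k)"
  unfolding hy_def XX_def by (simp add: power2_eq_square algebra_simps)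
lemma hy_ev1: "hy a b (2*k) + 1 = a+b+4*real k+2"
  unfolding hy_def by (simp add: algebra_simps)
lemma hy_od1: "hy a b (Suc (2*k)) + 1 = -(a+b+4*real k+2)"
  unfolding hy_def by (simp add: algebra_simps)

lemma sum_split: "(\<Sum>s=0..N. f s) = (\<Sum>k\<le>J. f (2*k) + f (Suc (2*k)))"
proof -
  have "(\<Sum>s\<le>Suc (2*J'). f s) = (\<Sum>k\<le>J'. f (2*k) + f (Suc (2*k)))" for J'
  proof (induction J')
    case 0 then show ?case by simp
  next
    case (Suc J')
    have "(\<Sum>s\<le>Suc (2*Suc J'). f s) = (\<Sum>s\<le>Suc (2*J'). f s) + f (2*Suc J') + f (Suc (2*Suc J'))"
      by simp
    then show ?case using Suc by (simp add: add_ac)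
  qed
  then show ?thesis unfolding atLeast0AtMost NJ .
qed

lemma kappa0: "(\<Sum>s=0..N. hw N a b s) = mm N J a b 0"
  unfolding sum_split mm_def[OF NJ ap bp] nu_def[OF NJ ap bp] by simp

lemma L1: assumes n: "n \<le> N" shows "(\<Sum>s=0..N. hw N a b s * hP N a b n (hy a b s)) = (if n = 0 then mm N J a b 0 else 0)"
proof (cases "even n")
  case True
  then obtain q where q: "n = 2*q" by (rule evenE)
  have "(\<Sum>s=0..N. hw N a b s * hP N a b n (hy a b s)) = (\<Sum>k\<le>J. hw N a b (2*k) * hP N a b n (hy a b (2*k)) + hw N a b (Suc (2*k)) * hP N a b n (hy a b (Suc (2*k))))"
    by (rule sum_split)
  also have "\<dots> = (\<Sum>k\<le>J. nu N a b k * hR N a b q (XX a b (real k)))"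
  proof (rule sum.cong[OF refl])
    fix k
    have e1: "hP N a b n (hy a b (2*k)) = hR N a b q (XX a b (real k))"
      using P_RS[of N a b q "hy a b (2*k)"] unfolding q hy_ev by simp
    have e2: "hP N a b n (hy a b (Suc (2*k))) = hR N a b q (XX a b (real k))"
      using P_RS[of N a b q "hy a b (Suc (2*k))"] unfolding q hy_od by simp
    show "hw N a b (2*k) * hP N a b n (hy a b (2*k)) + hw N a b (Suc (2*k)) * hP N a b n (hy a b (Suc (2*k)))
        = nu N a b k * hR N a b q (XX a b (real k))" unfolding e1 e2 nu_def[OF NJ ap bp] by (simp add: algebra_simps)
  qed
  also have "\<dots> = (if n = 0 then mm N J a b 0 else 0)"
  proof (cases "q = 0")
    case True then show ?thesis using q unfolding mm_def[OF NJ ap bp] by simp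
  next
    case False
    then have "q \<ge> 1" by simp
    from MR[OF NJ ap bp this] show ?thesis using q False by simp
  qed
  finally show ?thesis .
next
  case False
  then obtain q where q0: "n = 2*q+1" by (rule oddE)
  then have q: "n = Suc (2*q)" by simp
  have z: "hw N a b (2*k) * (hy a b (2*k)+1+a-b) + hw N a b (Suc (2*k)) * (hy a b (Suc (2*k))+1+a-b) = 0" for k
  proof -
    have dp: "de b + real k > 0" using pos[OF NJ ap bp] by simp
    have h1: "hy a b (2*k)+1+a-b = 4*(ga a + real k)" unfolding hy_ev1 ga_def[OF NJ ap bp] by (simp add: algebra_simps)
    have h2: "hy a b (Suc (2*k))+1+a-b = -4*(de b + real k)" unfolding hy_od1 de_def[OF NJ ap bp] by (simp add: algebra_simps)
    have r: "hw N a b (Suc (2*k)) = hw N a b (2*k) * ((ga a + real k)/(de b + real k))"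
      unfolding hw_od[OF NJ ap bp] hw_ev[OF NJ ap bp] ..
    show ?thesis unfolding h1 h2 r using dp by (simp add: field_simps)
  qed
  have "(\<Sum>s=0..N. hw N a b s * hP N a b n (hy a b s)) = (\<Sum>k\<le>J. hw N a b (2*k) * hP N a b n (hy a b (2*k)) + hw N a b (Suc (2*k)) * hP N a b n (hy a b (Suc (2*k))))"
    by (rule sum_split)
  also have "\<dots> = (\<Sum>k\<le>J. 0)"
  proof (rule sum.cong[OF refl])
    fix k
    have e1: "hP N a b n (hy a b (2*k)) = (hy a b (2*k)+1+a-b) * hS N a b q (XX a b (real k))"
      using P_RS[of N a b q "hy a b (2*k)"] unfolding q hy_ev by simp
    have e2: "hP N a b n (hy a b (Suc (2*k))) = (hy a b (Suc (2*k))+1+a-b) * hS N a b q (XX a b (real k))"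
      using P_RS[of N a b q "hy a b (Suc (2*k))"] unfolding q hy_od by simp
    have "hw N a b (2*k) * hP N a b n (hy a b (2*k)) + hw N a b (Suc (2*k)) * hP N a b n (hy a b (Suc (2*k)))
       = (hw N a b (2*k) * (hy a b (2*k)+1+a-b) + hw N a b (Suc (2*k)) * (hy a b (Suc (2*k))+1+a-b)) * hS N a b q (XX a b (real k))"
      unfolding e1 e2 by (simp add: algebra_simps)
    then show "hw N a b (2*k) * hP N a b n (hy a b (2*k)) + hw N a b (Suc (2*k)) * hP N a b n (hy a b (Suc (2*k))) = 0"
      unfolding z by simp
  qed
  finally show ?thesis using q by simp
qed

lemma L2: assumes s: "s \<le> N" shows "hP N a b (Suc N) (hy a b s) = 0"
proof -
  have sN: "Suc N = 2 * Suc J" using NJ by simp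
  have k: "s div 2 \<le> J" using s NJ by simp
  have "(hy a b s + 1)^2 = XX a b (real (s div 2))"
  proof (cases "even s")
    case True then obtain k where "s = 2*k" by (rule evenE)
    then show ?thesis using hy_ev by simp
  next
    case False then obtain k where "s = 2*k+1" by (rule oddE)
    then have "s = Suc (2*k)" by simp
    then show ?thesis using hy_od by simp
  qed
  then show ?thesis unfolding sN using P_RS[of N a b "Suc J" "hy a b s"] RJ1[OF NJ ap bp k] by simp
qed

lemma Prec: "hP N a b (Suc n) x = (x - hb a b n) * hP N a b n x - hu N a b n * hP N a b (n-1) x"
  by (cases n) (simp_all add: hu_def)

lemma hu0: "hu N a b 0 = 0" by (simp add: hu_def)

definition "MM n m = (\<Sum>s=0..N. hw N a b s * hP N a b n (hy a b s) * hP N a b m (hy a b s))"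
definition "hh n = (\<Prod>k=1..n. hu N a b k)"

lemma hh_Suc: "hh (Suc n) = hh n * hu N a b (Suc n)" unfolding hh_def by (simp add: prod.nat_ivl_Suc')

lemma MM_step: "MM n (Suc m) = MM (Suc n) m + (hb a b n - hb a b m) * MM n m + hu N a b n * MM (n-1) m - hu N a b m * MM n (m-1)"
proof -
  let ?P = "\<lambda>k s. hP N a b k (hy a b s)"
  have pw: "hw N a b s * ?P n s * ?P (Suc m) s = hw N a b s * ?P (Suc n) s * ?P m s + (hb a b n - hb a b m) * (hw N a b s * ?P n s * ?P m s)
     + hu N a b n * (hw N a b s * ?P (n-1) s * ?P m s) - hu N a b m * (hw N a b s * ?P n s * ?P (m-1) s)" for s
  proof -
    have A: "?P (Suc m) s = (hy a b s - hb a b m) * ?P m s - hu N a b m * ?P (m-1) s" by (rule Prec)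
    have B: "?P (Suc n) s = (hy a b s - hb a b n) * ?P n s - hu N a b n * ?P (n-1) s" by (rule Prec)
    show ?thesis unfolding A B by (simp add: algebra_simps)
  qed
  have "MM n (Suc m) = (\<Sum>s=0..N. hw N a b s * ?P (Suc n) s * ?P m s + (hb a b n - hb a b m) * (hw N a b s * ?P n s * ?P m s)
     + hu N a b n * (hw N a b s * ?P (n-1) s * ?P m s) - hu N a b m * (hw N a b s * ?P n s * ?P (m-1) s))"
    unfolding MM_def pw ..
  also have "\<dots> = MM (Suc n) m + (hb a b n - hb a b m) * MM n m + hu N a b n * MM (n-1) m - hu N a b m * MM n (m-1)"
    unfolding MM_def by (simp add: sum.distrib sum_subtractf sum_distrib_left)
  finally show ?thesis .
qed

lemma orth: "m \<le> N \<Longrightarrow> \<forall>n \<le> Suc N. MM n m = (if n = m then mm N J a b 0 * hh n else 0)"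
proof (induction m rule: less_induct)
  case (less m)
  show ?case
  proof (intro allI impI)
    fix n assume n: "n \<le> Suc N"
    show "MM n m = (if n = m then mm N J a b 0 * hh n else 0)"
    proof (cases "n = Suc N")
      case True
      then have "MM n m = 0" unfolding MM_def using L2 by simp
      then show ?thesis using True less.prems by simp
    next
      case False
      then have nN: "n \<le> N" using n by simp
      show ?thesis
      proof (cases m)
        case 0
        have "MM n 0 = (\<Sum>s=0..N. hw N a b s * hP N a b n (hy a b s))" unfolding MM_def by simp
        then show ?thesis using L1[OF nN] 0 by (simp add: hh_def)
      next
        case (Suc m')
        have IH1: "\<forall>n \<le> Suc N. MM n m' = (if n = m' then mm N J a b 0 * hh n else 0)" using less Suc by simp
        have IH2: "\<forall>n \<le> Suc N. MM n (m'-1) = (if n = m'-1 then mm N J a b 0 * hh n else 0)" using less Suc by simp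
        have v1: "MM (Suc n) m' = (if Suc n = m' then mm N J a b 0 * hh (Suc n) else 0)" using IH1 nN by simp
        have v2: "MM n m' = (if n = m' then mm N J a b 0 * hh n else 0)" using IH1 nN by simp
        have v3: "MM (n-1) m' = (if n-1 = m' then mm N J a b 0 * hh (n-1) else 0)" using IH1 nN by simp
        have v4: "MM n (m'-1) = (if n = m'-1 then mm N J a b 0 * hh n else 0)" using IH2 nN by simp
        have st: "MM n m = MM (Suc n) m' + (hb a b n - hb a b m') * MM n m' + hu N a b n * MM (n-1) m' - hu N a b m' * MM n (m'-1)"
          unfolding Suc by (rule MM_step)
        consider (A) "n = Suc m'" | (B) "Suc n = m'" | (C) "n \<noteq> Suc m'" "Suc n \<noteq> m'" by blast
        then show ?thesis
        proof cases
          case A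
          have f1: "MM (Suc n) m' = 0" using v1 A by simp
          have f2: "MM n m' = 0" using v2 A by simp
          have f3: "MM (n-1) m' = mm N J a b 0 * hh m'" using v3 A by simp
          have "n \<noteq> m' - 1" using A by simp
          then have f4: "MM n (m'-1) = 0" using v4 by simp
          have f5: "hh n = hh m' * hu N a b n" using A hh_Suc by simp
          show ?thesis unfolding st f1 f2 f3 f4 using A Suc f5 by simp
        next
          case B
          have f1: "MM (Suc n) m' = mm N J a b 0 * hh m'" using v1 B by simp
          have f2: "MM n m' = 0" using v2 B by simp
          have "n - 1 \<noteq> m'" using B by simp
          then have f3: "MM (n-1) m' = 0" using v3 by simp
          have "n = m' - 1" using B by simp
          then have f4: "MM n (m'-1) = mm N J a b 0 * hh n" using v4 by simp
          have f5: "hh m' = hh n * hu N a b m'" using B hh_Suc by auto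
          have nm: "n \<noteq> m" using B Suc by simp
          show ?thesis unfolding st f1 f2 f3 f4 f5 using nm by simp
        next
          case C
          have "hu N a b n * MM (n-1) m' = 0"
          proof (cases n)
            case 0 then show ?thesis by (simp add: hu0)
          next
            case (Suc n') then show ?thesis unfolding v3 using C by simp
          qed
          moreover have "hu N a b m' * MM n (m'-1) = 0"
          proof (cases m')
            case 0 then show ?thesis by (simp add: hu0)
          next
            case (Suc k) then show ?thesis unfolding v4 using C by auto
          qed
          ultimately show ?thesis unfolding st v1 v2 using C Suc by auto
        qed
      qed
    qed
  qed
qed


lemma main_ctx:
  shows "(\<forall>s \<le> (N - 1) div 2.
            pochhammer (1/2 + b/2) (s + 1) \<noteq> 0
          \<and> pochhammer (real N / 2 + 3/2 + (a + b)/2) s \<noteq> 0)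
       \<and> (\<forall>s \<le> N. hw N a b s > 0)
       \<and> (\<forall>n \<le> N. \<forall>m \<le> N.
            (\<Sum>s = 0..N. hw N a b s * hP N a b n (hy a b s) * hP N a b m (hy a b s))
            = (if n = m then (\<Sum>s = 0..N. hw N a b s) * (\<Prod>k = 1..n. hu N a b k) else 0))
       \<and> (\<Sum>s = 0..N. hw N a b s)
            = pochhammer (1 + (a + b)/2) ((N + 1) div 2)
              / pochhammer ((b + 1)/2) ((N + 1) div 2)"
proof (intro conjI allI impI)
  fix s
  have p1: "1/2 + b/2 > 0" using bp by simp
  have p2: "real N / 2 + 3/2 + (a + b)/2 > 0" using ap bp by (simp add: field_simps)
  show "pochhammer (1/2 + b/2) (s + 1) \<noteq> 0" using pochhammer_pos[OF p1, of "s+1"] by simp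
  show "pochhammer (real N / 2 + 3/2 + (a + b)/2) s \<noteq> 0" using pochhammer_pos[OF p2, of s] by simp
next
  fix s assume s: "s \<le> N"
  have k: "s div 2 \<le> J" using s NJ by simp
  show "hw N a b s > 0"
  proof (cases "even s")
    case True then obtain k where ks: "s = 2*k" by (rule evenE)
    then show ?thesis using hw_pos[OF NJ ap bp, of k] k by simp
  next
    case False then obtain k where "s = 2*k+1" by (rule oddE)
    then have ks: "s = Suc (2*k)" by simp
    then show ?thesis using hw_pos[OF NJ ap bp, of k] k by simp
  qed
next
  fix n m assume n: "n \<le> N" and m: "m \<le> N"
  have "MM n m = (if n = m then mm N J a b 0 * hh n else 0)" using orth[OF m] n by simp
  then show "(\<Sum>s = 0..N. hw N a b s * hP N a b n (hy a b s) * hP N a b m (hy a b s))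
            = (if n = m then (\<Sum>s = 0..N. hw N a b s) * (\<Prod>k = 1..n. hu N a b k) else 0)"
    unfolding MM_def hh_def kappa0 .
next
  have e: "(N + 1) div 2 = Suc J" using NJ by simp
  have d: "(b+1)/2 = de b" unfolding de_def[OF NJ ap bp] by simp
  have g: "1 + (a + b)/2 = gg a b" unfolding gg_def[OF NJ ap bp] ..
  show "(\<Sum>s = 0..N. hw N a b s) = pochhammer (1 + (a + b)/2) ((N + 1) div 2) / pochhammer ((b + 1)/2) ((N + 1) div 2)"
    unfolding kappa0 kappa[OF NJ ap bp] e d g ..
qed

end

theorem mainTheorem3:
  fixes N :: nat and \<alpha> \<beta> :: real
  assumes "odd N" and "\<alpha> > -1" and "\<beta> > -1"
  shows "(\<forall>s \<le> (N - 1) div 2.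
            pochhammer (1/2 + \<beta>/2) (s + 1) \<noteq> 0
          \<and> pochhammer (real N / 2 + 3/2 + (\<alpha> + \<beta>)/2) s \<noteq> 0)
       \<and> (\<forall>s \<le> N. hw N \<alpha> \<beta> s > 0)
       \<and> (\<forall>n \<le> N. \<forall>m \<le> N.
            (\<Sum>s = 0..N. hw N \<alpha> \<beta> s * hP N \<alpha> \<beta> n (hy \<alpha> \<beta> s) * hP N \<alpha> \<beta> m (hy \<alpha> \<beta> s))
            = (if n = m then (\<Sum>s = 0..N. hw N \<alpha> \<beta> s) * (\<Prod>k = 1..n. hu N \<alpha> \<beta> k) else 0))
       \<and> (\<Sum>s = 0..N. hw N \<alpha> \<beta> s)
            = pochhammer (1 + (\<alpha> + \<beta>)/2) ((N + 1) div 2)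
              / pochhammer ((\<beta> + 1)/2) ((N + 1) div 2)"
proof -
  obtain J where "N = 2*J+1" using assms(1) by (rule oddE)
  then have NJ: "N = Suc (2*J)" by simp
  show ?thesis by (rule main_ctx[OF NJ assms(2) assms(3)])
qed


end
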